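(* Let $\mathcal H$ be an $n$-vertex linear hypergraph and let $\{A,B\}$ be a partition of the edge set of $\mathcal H$ such that $|A|+|B|-n \le |A|/4$. If for every two distinct intersecting edges $e,f\in A$ the pair $\{e,f\}$ is useful, then $\mathcal H$ has a proper edge-colouring with $n$ colours in which each colour is assigned to at most two edges.
   Context: A hypergraph has a finite vertex set and a set of nonempty edges; linear means any two distinct edges share at most one vertex. For an edge $e$, $N(e)$ denotes the set of edges $f\ne e$ of $\mathcal H$ with $f\cap e\ne\varnothing$. In an $n$-vertex hypergraph, a pair $\{e,f\}\subseteq\mathcal H$ is useful if $e\ne f$, $e\cap f\ne\varnothing$, and $|N(e)\cap N(f)|\le n-2$. A proper edge-colouring assigns colours to edges so that distinct intersecting edges get different colours. *)

theory Defs
  imports Complex_Main "HOL-Library.FuncSet"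
begin

definition hypergraph :: "'a set \<Rightarrow> 'a set set \<Rightarrow> bool" where
  "hypergraph V H \<longleftrightarrow> finite V \<and> (\<forall>e\<in>H. e \<noteq> {} \<and> e \<subseteq> V)"

definition linear_hg :: "'a set set \<Rightarrow> bool" where
  "linear_hg H \<longleftrightarrow> (\<forall>e\<in>H. \<forall>f\<in>H. e \<noteq> f \<longrightarrow> card (e \<inter> f) \<le> 1)"

definition nbhd :: "'a set set \<Rightarrow> 'a set \<Rightarrow> 'a set set" where
  "nbhd H e = {f \<in> H. f \<noteq> e \<and> f \<inter> e \<noteq> {}}"

definition useful :: "nat \<Rightarrow> 'a set set \<Rightarrow> 'a set \<Rightarrow> 'a set \<Rightarrow> bool" where
  "useful n H e f \<longleftrightarrow> e \<in> H \<and> f \<in> H \<and> e \<noteq> f \<and> e \<inter> f \<noteq> {}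
     \<and> int (card (nbhd H e \<inter> nbhd H f)) \<le> int n - 2"

definition proper_edge_colouring :: "'a set set \<Rightarrow> ('a set \<Rightarrow> 'c) \<Rightarrow> bool" where
  "proper_edge_colouring H c \<longleftrightarrow>
     (\<forall>e\<in>H. \<forall>f\<in>H. e \<noteq> f \<and> e \<inter> f \<noteq> {} \<longrightarrow> c e \<noteq> c f)"

end

theory Submission
  imports Defs
begin

definition mt :: "'a set set \<Rightarrow> 'a set set set \<Rightarrow> bool" where
  "mt H S \<longleftrightarrow> (\<forall>s\<in>S. \<exists>g h. s = {g,h} \<and> g \<in> H \<and> h \<in> H \<and> g \<noteq> h \<and> g \<inter> h = {})
     \<and> pairwise disjnt S"

lemma mt_sub: "mt H S \<Longrightarrow> S \<subseteq> Pow H"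
proof
  fix s assume "mt H S" "s \<in> S"
  then obtain g h where "s = {g,h}" "g \<in> H" "h \<in> H" unfolding mt_def by meson
  then show "s \<in> Pow H" by simp
qed

lemma mt_finite: "finite H \<Longrightarrow> mt H S \<Longrightarrow> finite S"
  by (rule finite_subset[OF mt_sub]) simp_all

lemma mt_card_Union:
  assumes "finite H" "mt H S"
  shows "card (\<Union>S) = 2 * card S"
proof -
  have "card (\<Union>S) = sum card S"
  proof (rule card_Union_disjoint)
    show "pairwise disjnt S" using assms(2) unfolding mt_def by simp
    fix A assume "A \<in> S"
    then have "A \<subseteq> H" using mt_sub[OF assms(2)] by blast
    then show "finite A" using assms(1) by (rule finite_subset)
  qed
  also have "\<dots> = sum (\<lambda>_. 2) S"
  proof (rule sum.cong)
    fix s assume "s \<in> S"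
    then obtain g h where "s = {g,h}" "g \<noteq> h" using assms(2) unfolding mt_def by meson
    then show "card s = 2" by simp
  qed simp
  finally show ?thesis by simp
qed


lemma mt_insert:
  assumes fin: "finite H" and m: "mt H S" and e: "e \<in> H" "e \<notin> \<Union>S" and f: "f \<in> H" "f \<notin> \<Union>S"
    and ef: "e \<noteq> f" "e \<inter> f = {}"
  shows "mt H (insert {e,f} S) \<and> card (insert {e,f} S) = Suc (card S)"
proof
  have "\<forall>s\<in>S. \<exists>g h. s = {g,h} \<and> g \<in> H \<and> h \<in> H \<and> g \<noteq> h \<and> g \<inter> h = {}"
    using m unfolding mt_def by simp
  moreover have "\<exists>g h. {e,f} = {g,h} \<and> g \<in> H \<and> h \<in> H \<and> g \<noteq> h \<and> g \<inter> h = {}"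
    by (intro exI[of _ e] exI[of _ f]) (simp add: e f ef)
  moreover have "pairwise disjnt (insert {e,f} S)"
  proof -
    have pd: "pairwise disjnt S" using m unfolding mt_def by simp
    have "e \<notin> t" "f \<notin> t" if "t \<in> S" for t using that e f by auto
    then show ?thesis unfolding pairwise_insert using pd by simp
  qed
  ultimately show "mt H (insert {e,f} S)" unfolding mt_def by simp
  have "{e,f} \<notin> S" by (metis UnionI e(2) insertI1)
  then show "card (insert {e,f} S) = Suc (card S)" using mt_finite[OF fin m] by simp
qed

lemma mt_swap:
  assumes fin: "finite H" and m: "mt H S" and s: "s \<in> S" "s = {g,h}"
    and e: "e \<in> H" "e \<notin> \<Union>S" and f: "f \<in> H" "f \<notin> \<Union>S"
    and ef: "e \<noteq> f" "e \<inter> g = {}" "f \<inter> h = {}"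
  shows "mt H (insert {e,g} (insert {f,h} (S - {s}))) \<and>
         card (insert {e,g} (insert {f,h} (S - {s}))) = Suc (card S)"
proof
  have all: "\<forall>s\<in>S. \<exists>g h. s = {g,h} \<and> g \<in> H \<and> h \<in> H \<and> g \<noteq> h \<and> g \<inter> h = {}"
    using m unfolding mt_def by simp
  have pd: "pairwise disjnt S" using m unfolding mt_def by simp
  have gh: "g \<in> H" "h \<in> H" "g \<noteq> h" using all s by (auto simp: doubleton_eq_iff)
  have gU: "g \<in> \<Union>S" "h \<in> \<Union>S" using s by auto
  have disj: "g \<notin> t \<and> h \<notin> t" if "t \<in> S - {s}" for t
  proof -
    have "disjnt s t" using pairwiseD[OF pd s(1), of t] that by auto
    then show ?thesis using s(2) unfolding disjnt_def by blast
  qed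
  have A: "\<exists>g' h'. {e,g} = {g',h'} \<and> g' \<in> H \<and> h' \<in> H \<and> g' \<noteq> h' \<and> g' \<inter> h' = {}"
    by (intro exI[of _ e] exI[of _ g]) (use e gh gU ef in auto)
  have B: "\<exists>g' h'. {f,h} = {g',h'} \<and> g' \<in> H \<and> h' \<in> H \<and> g' \<noteq> h' \<and> g' \<inter> h' = {}"
    by (intro exI[of _ f] exI[of _ h]) (use f gh gU ef in auto)
  have P1: "pairwise disjnt (S - {s})" using pd by (rule pairwise_subset) auto
  have fU: "f \<notin> t" "e \<notin> t" if "t \<in> S - {s}" for t using that f e by auto
  have P2: "pairwise disjnt (insert {f,h} (S - {s}))"
    unfolding pairwise_insert using P1 disj fU by simp
  have efgh: "e \<noteq> h" "g \<noteq> f" using e f gU by auto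
  have P3: "pairwise disjnt (insert {e,g} (insert {f,h} (S - {s})))"
    unfolding pairwise_insert[of _ "{e,g}"] using P2 disj fU efgh ef(1) gh(3)
    by auto
  have Q: "\<forall>t\<in>insert {e,g} (insert {f,h} (S - {s})). \<exists>g h. t = {g,h} \<and> g \<in> H \<and> h \<in> H \<and> g \<noteq> h \<and> g \<inter> h = {}"
  proof
    fix t assume "t \<in> insert {e,g} (insert {f,h} (S - {s}))"
    then consider "t = {e,g}" | "t = {f,h}" | "t \<in> S" by blast
    then show "\<exists>g h. t = {g,h} \<and> g \<in> H \<and> h \<in> H \<and> g \<noteq> h \<and> g \<inter> h = {}"
    proof cases
      case 1 then show ?thesis using A by simp
    next
      case 2 then show ?thesis using B by simp
    next
      case 3 then show ?thesis using all by simp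
    qed
  qed
  show "mt H (insert {e,g} (insert {f,h} (S - {s})))"
    unfolding mt_def using P3 Q by simp
  have fS: "finite S" using mt_finite[OF fin m] .
  have n1: "{f,h} \<notin> S - {s}" by (metis DiffD1 UnionI f(2) insertI1)
  have n2: "{e,g} \<notin> insert {f,h} (S - {s})"
  proof
    assume "{e,g} \<in> insert {f,h} (S - {s})"
    then consider "{e,g} = {f,h}" | "{e,g} \<in> S" by (meson DiffD1 insertE)
    then show False
    proof cases
      case 1 then show False using ef(1) efgh(1) by (simp add: doubleton_eq_iff)
    next
      case 2 then show False by (metis UnionI e(2) insertI1)
    qed
  qed
  have c1: "card (S - {s}) = card S - 1" by (rule card_Diff_singleton[OF s(1)])
  have c2: "card S > 0" using s(1) fS card_gt_0_iff by (metis empty_iff)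
  have f2: "finite (S - {s})" using fS by simp
  have c3: "card (insert {f,h} (S - {s})) = Suc (card (S - {s}))"
    by (rule card_insert_disjoint[OF f2 n1])
  have c4: "card (insert {e,g} (insert {f,h} (S - {s}))) = Suc (card (insert {f,h} (S - {s})))"
    by (rule card_insert_disjoint[OF finite_insert[THEN iffD2, OF f2] n2])
  show "card (insert {e,g} (insert {f,h} (S - {s}))) = Suc (card S)"
    using c1 c2 c3 c4 by linarith
qed

lemma colouring:
  fixes H :: "'a set set" and S
  assumes fin: "finite H" and m: "mt H S" and cd: "card H \<le> n + card S"
  shows "\<exists>c :: 'a set \<Rightarrow> nat. c \<in> H \<rightarrow> {..<n} \<and> proper_edge_colouring H c
           \<and> (\<forall>i<n. card {e \<in> H. c e = i} \<le> 2)"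
proof -
  define Q where "Q = S \<union> (\<lambda>e. {e}) ` (H - \<Union>S)"
  have fS: "finite S" using mt_finite fin m by blast
  have US: "\<Union>S \<subseteq> H" using mt_sub[OF m] by blast
  have fQ: "finite Q" unfolding Q_def using fS fin by simp
  have "card Q \<le> card S + card ((\<lambda>e. {e}) ` (H - \<Union>S))"
    unfolding Q_def by (rule card_Un_le)
  also have "\<dots> \<le> card S + card (H - \<Union>S)"
    using card_image_le fin by auto
  also have "card (H - \<Union>S) = card H - 2 * card S"
    using card_Diff_subset[OF finite_subset[OF US fin] US] mt_card_Union[OF fin m] by simp
  finally have cQ: "card Q \<le> n" using cd mt_card_Union[OF fin m] card_mono[OF fin US] by linarith
  obtain b where b: "b ` Q \<subseteq> {..<n}" "inj_on b Q"
    using card_le_inj[OF fQ finite_lessThan[of n]] cQ by auto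
  have pd: "pairwise disjnt S" using m unfolding mt_def by blast
  have uniq: "q = q'" if hq: "q \<in> Q" "q' \<in> Q" "e \<in> q" "e \<in> q'" for q q' e
  proof -
    have sg: "\<exists>x. r = {x} \<and> x \<notin> \<Union>S" if "r \<in> Q" "r \<notin> S" for r
      using that unfolding Q_def by blast
    show ?thesis
    proof (cases "q \<in> S")
      case True
      show ?thesis
      proof (cases "q' \<in> S")
        case True
        show ?thesis
        proof (rule ccontr)
          assume "q \<noteq> q'"
          then have "disjnt q q'" using pairwiseD[OF pd \<open>q \<in> S\<close> True] by blast
          then show False using hq(3,4) unfolding disjnt_def by blast
        qed
      next
        case False
        then obtain x where "q' = {x}" "x \<notin> \<Union>S" using sg hq(2) by blast
        then show ?thesis using hq(3,4) \<open>q \<in> S\<close> by blast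
      qed
    next
      case False
      then obtain x where x: "q = {x}" "x \<notin> \<Union>S" using sg hq(1) by blast
      show ?thesis
      proof (cases "q' \<in> S")
        case True
        then show ?thesis using hq(3,4) x by blast
      next
        case False
        then obtain y where "q' = {y}" using sg hq(2) by blast
        then show ?thesis using hq(3,4) x by blast
      qed
    qed
  qed
  have ex: "\<exists>q. q \<in> Q \<and> e \<in> q" if "e \<in> H" for e
    using that unfolding Q_def by blast
  define cls where "cls e = (THE q. q \<in> Q \<and> e \<in> q)" for e
  have cls: "cls e \<in> Q \<and> e \<in> cls e" if eH: "e \<in> H" for e
  proof -
    obtain q where q: "q \<in> Q" "e \<in> q" using ex[OF eH] by blast
    have "(THE q. q \<in> Q \<and> e \<in> q) = q"
      by (rule the_equality) (use q uniq in auto)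
    then show ?thesis using q unfolding cls_def by simp
  qed
  have Qform: "\<exists>g h. q = {g,h} \<and> (g \<noteq> h \<longrightarrow> g \<inter> h = {})" if "q \<in> Q" for q
  proof (cases "q \<in> S")
    case True
    have "\<forall>s\<in>S. \<exists>g h. s = {g,h} \<and> g \<in> H \<and> h \<in> H \<and> g \<noteq> h \<and> g \<inter> h = {}"
      using m unfolding mt_def by simp
    then obtain g h where gh: "q = {g,h}" "g \<inter> h = {}" using True by meson
    show ?thesis by (intro exI[of _ g] exI[of _ h]) (simp add: gh)
  next
    case False
    from that False have "q \<in> (\<lambda>e. {e}) ` (H - \<Union>S)" unfolding Q_def by simp
    then obtain e where e: "q = {e}" by (auto simp: image_iff)
    show ?thesis by (intro exI[of _ e] exI[of _ e]) (simp add: e)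
  qed
  define c where "c e = b (cls e)" for e
  have "c \<in> H \<rightarrow> {..<n}" unfolding c_def using cls b by blast
  moreover have "proper_edge_colouring H c"
    unfolding proper_edge_colouring_def
  proof (intro ballI impI)
    fix e f assume ef: "e \<in> H" "f \<in> H" "e \<noteq> f \<and> e \<inter> f \<noteq> {}"
    show "c e \<noteq> c f"
    proof
      assume "c e = c f"
      then have "cls e = cls f" using inj_onD[OF b(2) _ conjunct1[OF cls[OF ef(1)]] conjunct1[OF cls[OF ef(2)]]]
        unfolding c_def by simp
      then have ee: "e \<in> cls e" "f \<in> cls e" using cls ef by auto
      obtain g h where gh: "cls e = {g,h}" "g \<noteq> h \<longrightarrow> g \<inter> h = {}"
        using Qform[OF conjunct1[OF cls[OF ef(1)]]] by blast
      have "{e,f} = {g,h}" using ee gh ef by auto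
      then show False using ef gh by (auto simp: doubleton_eq_iff)
    qed
  qed
  moreover have "card {e \<in> H. c e = i} \<le> 2" for i
  proof (cases "{e \<in> H. c e = i} = {}")
    case False
    then obtain e0 where e0: "e0 \<in> H" "c e0 = i" by blast
    obtain g h where gh: "cls e0 = {g,h}" using Qform[OF conjunct1[OF cls[OF e0(1)]]] by blast
    have "{e \<in> H. c e = i} \<subseteq> {g,h}"
    proof
      fix e assume "e \<in> {e \<in> H. c e = i}"
      then have "e \<in> H" "c e = c e0" using e0 by auto
      then have "cls e = cls e0" using inj_onD[OF b(2) _ conjunct1[OF cls[OF \<open>e \<in> H\<close>]] conjunct1[OF cls[OF e0(1)]]]
        unfolding c_def by simp
      then show "e \<in> {g,h}" using cls \<open>e \<in> H\<close> gh by blast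
    qed
    then have "card {e \<in> H. c e = i} \<le> card {g,h}" by (intro card_mono) auto
    also have "\<dots> \<le> 2" by (simp add: card_insert_if)
    finally show ?thesis .
  next
    case True
    then show ?thesis by (metis card.empty zero_le)
  qed
  ultimately show ?thesis by blast
qed

theorem proposition5p4:
  fixes V :: "'a set" and H A B :: "'a set set" and n :: nat
  assumes "hypergraph V H" and "card V = n" and "linear_hg H"
    and "A \<union> B = H" and "A \<inter> B = {}"
    and "real (card A) + real (card B) - real n \<le> real (card A) / 4"
    and "\<forall>e\<in>A. \<forall>f\<in>A. e \<noteq> f \<and> e \<inter> f \<noteq> {} \<longrightarrow> useful n H e f"
  shows "\<exists>c :: 'a set \<Rightarrow> nat. c \<in> H \<rightarrow> {..<n} \<and> proper_edge_colouring H c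
           \<and> (\<forall>i<n. card {e \<in> H. c e = i} \<le> 2)"
proof -
  note a = assms
  have HV: "H \<subseteq> Pow V" "finite V" using a(1) unfolding hypergraph_def by auto
  have fin: "finite H" by (rule finite_subset[OF HV(1)]) (simp add: HV(2))
  have fA: "finite A" "finite B" using a(4) fin by auto
  have cH: "card H = card A + card B" using card_Un_disjoint[OF fA a(5)] a(4) by simp
  define C where "C = {S. mt H S}"
  have fC: "finite C" unfolding C_def
    by (rule finite_subset[of _ "Pow (Pow H)"]) (use mt_sub fin in auto)
  have C0: "{} \<in> C" unfolding C_def mt_def by simp
  define k where "k = Max (card ` C)"
  have "k \<in> card ` C" unfolding k_def using fC C0 by (intro Max_in) auto
  then obtain S where m: "mt H S" and kS: "card S = k" unfolding C_def by auto
  have kmax: "card S' \<le> k" if "mt H S'" for S'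
    unfolding k_def using fC that unfolding C_def by (intro Max_ge) auto
  have "card H \<le> n + k"
  proof (rule ccontr)
    assume big: "\<not> card H \<le> n + k"
    have A4: "4 * k + 4 \<le> card A"
    proof -
      have "real (card H) \<ge> real n + real k + 1" using big by linarith
      moreover have "real (card H) = real (card A) + real (card B)" using cH by simp
      ultimately have "real k + 1 \<le> real (card A) / 4" using a(6) by linarith
      then have "real (4 * k + 4) \<le> real (card A)" by (simp add: field_simps)
      then show ?thesis by (simp only: of_nat_le_iff)
    qed
    define U where "U = \<Union>S"
    define H' where "H' = H - U"
    have UH: "U \<subseteq> H" unfolding U_def using Union_mono[OF mt_sub[OF m]] by simp
    have cU: "card U = 2 * k" unfolding U_def using mt_card_Union[OF fin m] kS by simp
    have fU: "finite U" using UH fin finite_subset by blast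
    have cH': "card H' = card H - 2 * k" unfolding H'_def using card_Diff_subset[OF fU UH] cU by simp
    have all: "\<forall>s\<in>S. \<exists>g h. s = {g,h} \<and> g \<in> H \<and> h \<in> H \<and> g \<noteq> h \<and> g \<inter> h = {}"
      using m unfolding mt_def by simp
    have fS: "finite S" using mt_finite[OF fin m] .
    have I: "e \<inter> f \<noteq> {}" if "e \<in> H'" "f \<in> H'" "e \<noteq> f" for e f
    proof
      assume ef0: "e \<inter> f = {}"
      have eU: "e \<in> H" "e \<notin> \<Union>S" "f \<in> H" "f \<notin> \<Union>S"
        using that(1,2) unfolding H'_def U_def by auto
      have "mt H (insert {e,f} S) \<and> card (insert {e,f} S) = Suc (card S)"
        by (rule mt_insert[OF fin m eU that(3) ef0])
      then have "Suc k \<le> k" using kmax kS by metis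
      then show False by simp
    qed
    have II: "\<not> (e \<inter> g = {} \<and> f \<inter> h = {})"
      if "s \<in> S" "s = {g,h}" "e \<in> H'" "f \<in> H'" "e \<noteq> f" for s g h e f
    proof
      assume ef0: "e \<inter> g = {} \<and> f \<inter> h = {}"
      have eU: "e \<in> H" "e \<notin> \<Union>S" "f \<in> H" "f \<notin> \<Union>S"
        using that(3,4) unfolding H'_def U_def by auto
      have "mt H (insert {e,g} (insert {f,h} (S - {s}))) \<and>
         card (insert {e,g} (insert {f,h} (S - {s}))) = Suc (card S)"
        by (rule mt_swap[OF fin m that(1,2) eU that(5) conjunct1[OF ef0] conjunct2[OF ef0]])
      then have "Suc k \<le> k" using kmax kS by metis
      then show False by simp
    qed
    define Bs where "Bs s = {x\<in>H'. \<forall>y\<in>s. x \<inter> y = {}}" for s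
    define Bad where "Bad = (\<Union>s\<in>S. Bs s)"
    have fH': "finite H'" unfolding H'_def using fin by simp
    have cBs: "card (Bs s) \<le> 1" if sS: "s \<in> S" for s
    proof -
      obtain g h where gh: "s = {g,h}" using all sS by meson
      have "\<forall>x1\<in>Bs s. \<forall>x2\<in>Bs s. x1 = x2"
      proof (intro ballI)
        fix x1 x2 assume x: "x1 \<in> Bs s" "x2 \<in> Bs s"
        show "x1 = x2"
        proof (rule ccontr)
          assume "x1 \<noteq> x2"
          moreover have "x1 \<in> H'" "x2 \<in> H'" "x1 \<inter> g = {}" "x2 \<inter> h = {}"
            using x gh unfolding Bs_def by auto
          ultimately show False using II[OF sS gh] by blast
        qed
      qed
      moreover have "finite (Bs s)" unfolding Bs_def using fH' by simp
      ultimately show ?thesis using card_le_Suc0_iff_eq by (metis One_nat_def)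
    qed
    have cBad: "card Bad \<le> k"
    proof -
      have "card Bad \<le> (\<Sum>s\<in>S. card (Bs s))" unfolding Bad_def by (rule card_UN_le[OF fS])
      also have "\<dots> \<le> (\<Sum>s\<in>S. 1)" by (rule sum_mono) (use cBs in auto)
      finally show ?thesis using kS by simp
    qed
    define A' where "A' = (A \<inter> H') - Bad"
    have fA': "finite A'" unfolding A'_def using fA by simp
    have "card A \<le> card (A \<inter> H') + card U"
    proof -
      have "A \<subseteq> (A \<inter> H') \<union> U" unfolding H'_def using a(4) by blast
      then have "card A \<le> card ((A \<inter> H') \<union> U)" using fA' fU fA by (intro card_mono) auto
      also have "\<dots> \<le> card (A \<inter> H') + card U" by (rule card_Un_le)
      finally show ?thesis .
    qed
    moreover have "card (A \<inter> H') \<le> card A' + card Bad"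
    proof -
      have "A \<inter> H' \<subseteq> A' \<union> Bad" unfolding A'_def by blast
      then have "card (A \<inter> H') \<le> card (A' \<union> Bad)"
        using fA' by (intro card_mono) (auto simp: Bad_def Bs_def fH' fS)
      also have "\<dots> \<le> card A' + card Bad" by (rule card_Un_le)
      finally show ?thesis .
    qed
    ultimately have cA': "card A' \<ge> 2" using A4 cU cBad by linarith
    obtain e where e: "e \<in> A'" using cA' by (metis card.empty not_numeral_le_zero ex_in_conv)
    have "card (A' - {e}) \<ge> 1" using cA' e by (simp add: card_Diff_singleton)
    then obtain f where f: "f \<in> A'" "f \<noteq> e"
      by (metis Diff_iff card.empty ex_in_conv insertI1 not_one_le_zero)
    have eH': "e \<in> H'" "e \<in> A" "e \<notin> Bad" using e unfolding A'_def by auto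
    have fH'': "f \<in> H'" "f \<in> A" "f \<notin> Bad" using f unfolding A'_def by auto
    have ef: "e \<inter> f \<noteq> {}" using I eH' fH'' f(2) by auto
    have usf: "useful n H e f" using a(7) eH'(2) fH''(2) f(2) ef by auto
    then have Nle: "int (card (nbhd H e \<inter> nbhd H f)) \<le> int n - 2" unfolding useful_def by simp
    define N where "N = nbhd H e \<inter> nbhd H f"
    have eH: "e \<in> H" "f \<in> H" "e \<notin> U" "f \<notin> U" using eH' fH'' unfolding H'_def by auto
    have fN: "finite N" unfolding N_def nbhd_def using fin by simp
    define X1 where "X1 = H' - {e,f}"
    define X2 where "X2 = N \<inter> U"
    have X1N: "X1 \<subseteq> N"
    proof
      fix x assume x: "x \<in> X1"
      then have "x \<in> H'" "x \<noteq> e" "x \<noteq> f" unfolding X1_def by auto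
      then have "x \<inter> e \<noteq> {}" "x \<inter> f \<noteq> {}" using I eH'(1) fH''(1) by auto
      then show "x \<in> N" using \<open>x \<in> H'\<close> \<open>x \<noteq> e\<close> \<open>x \<noteq> f\<close>
        unfolding N_def nbhd_def H'_def by auto
    qed
    have cX1: "card X1 + 2 = card H'"
    proof -
      have "{e,f} \<subseteq> H'" using eH'(1) fH''(1) by auto
      then have "card X1 = card H' - card {e,f}" unfolding X1_def
        by (intro card_Diff_subset) auto
      moreover have "card {e,f} = 2" using f(2) by simp
      moreover have "card {e,f} \<le> card H'" using \<open>{e,f} \<subseteq> H'\<close> fH' by (intro card_mono)
      ultimately show ?thesis by linarith
    qed
    have ex2: "\<exists>y. y \<in> s \<and> y \<inter> e \<noteq> {} \<and> y \<inter> f \<noteq> {}" if sS: "s \<in> S" for s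
    proof (rule ccontr)
      assume no: "\<not> ?thesis"
      obtain g h where gh: "s = {g,h}" using all sS by meson
      have "e \<notin> Bs s" "f \<notin> Bs s" using eH'(3) fH''(3) sS unfolding Bad_def by auto
      then have ne: "\<not> (e \<inter> g = {} \<and> e \<inter> h = {})" "\<not> (f \<inter> g = {} \<and> f \<inter> h = {})"
        using eH'(1) fH''(1) gh unfolding Bs_def by auto
      have n1: "\<not> (e \<inter> g = {} \<and> f \<inter> h = {})" using II[OF sS gh eH'(1) fH''(1)] f(2) by auto
      have n2: "\<not> (f \<inter> g = {} \<and> e \<inter> h = {})" using II[OF sS gh fH''(1) eH'(1)] f(2) by auto
      have "(g \<inter> e = {} \<or> g \<inter> f = {}) \<and> (h \<inter> e = {} \<or> h \<inter> f = {})" using no gh by auto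
      then show False using ne n1 n2 by (auto simp: Int_commute)
    qed
    define \<phi> where "\<phi> s = (SOME y. y \<in> s \<and> y \<inter> e \<noteq> {} \<and> y \<inter> f \<noteq> {})" for s
    have phi: "\<phi> s \<in> s \<and> \<phi> s \<inter> e \<noteq> {} \<and> \<phi> s \<inter> f \<noteq> {}" if "s \<in> S" for s
      unfolding \<phi>_def by (rule someI_ex) (rule ex2[OF that])
    have pd: "pairwise disjnt S" using m unfolding mt_def by simp
    have injphi: "inj_on \<phi> S"
    proof (rule inj_onI)
      fix s t assume st: "s \<in> S" "t \<in> S" "\<phi> s = \<phi> t"
      show "s = t"
      proof (rule ccontr)
        assume "s \<noteq> t"
        then have "disjnt s t" using pairwiseD[OF pd st(1,2)] by simp
        moreover have "\<phi> s \<in> s" "\<phi> t \<in> t" using phi[OF st(1)] phi[OF st(2)] by simp_all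
        ultimately show False using st(3) unfolding disjnt_def by (metis IntI empty_iff)
      qed
    qed
    have phiX2: "\<phi> ` S \<subseteq> X2"
    proof
      fix y assume "y \<in> \<phi> ` S"
      then obtain s where s: "s \<in> S" "y = \<phi> s" by blast
      then have y: "y \<in> s" "y \<inter> e \<noteq> {}" "y \<inter> f \<noteq> {}" using phi by auto
      have "y \<in> U" using s(1) y(1) unfolding U_def by blast
      moreover have "y \<in> H" using UH \<open>y \<in> U\<close> by blast
      moreover have "y \<noteq> e" "y \<noteq> f" using eH \<open>y \<in> U\<close> by auto
      ultimately show "y \<in> X2" unfolding X2_def N_def nbhd_def using y by auto
    qed
    have fX2: "finite X2" unfolding X2_def using fN by simp
    have cX2: "k \<le> card X2" using card_inj_on_le[OF injphi phiX2 fX2] kS by simp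
    have dis: "X1 \<inter> X2 = {}" unfolding X1_def X2_def H'_def by blast
    have "X1 \<union> X2 \<subseteq> N" using X1N unfolding X2_def by blast
    then have "card (X1 \<union> X2) \<le> card N" using fN by (intro card_mono)
    moreover have "card (X1 \<union> X2) = card X1 + card X2"
      by (rule card_Un_disjoint) (use fH' fX2 dis in \<open>auto simp: X1_def\<close>)
    ultimately have "card H' - 2 + k \<le> card N" using cX1 cX2 by linarith
    moreover have "card H \<ge> 2 * k" using card_mono[OF fin UH] cU by simp
    ultimately have "card H - k - 2 \<le> card N" using cH' cX1 by linarith
    then have "int (card N) \<ge> int n - 1" using big by linarith
    then show False using Nle unfolding N_def by linarith
  qed
  then show ?thesis using colouring[OF fin m] kS by simp
qed

end
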